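(* Let $\mathcal{S}$ be a subspace of $\mathbb{C}^n$. Let $\mathcal{D}^+_n$ be the set of $n\times n$ positive definite diagonal matrices and $\mathcal{D}^+_{0,n}$ the set of $n\times n$ positive semidefinite diagonal matrices. Then $$\sup_{D\in\mathcal{D}^+_n}\|P_{D,\mathcal{S}}\|=\sup_{D\in\mathcal{D}^+_{0,n}}\|P_{D,\mathcal{S}}\|.$$
   Context: Norms are operator norms for the Euclidean norm. For a positive semidefinite matrix $D$ and a subspace $\mathcal{S}$ of $\mathbb{C}^n$, write $D=\begin{pmatrix} a & b\\ b^* & c\end{pmatrix}$ with respect to $\mathcal{S}\oplus\mathcal{S}^\perp$; then $P_{D,\mathcal{S}}:=\begin{pmatrix} 1 & a^\dagger b\\ 0&0\end{pmatrix}$ ($a^\dagger$ Moore–Penrose inverse), an idempotent with range $\mathcal{S}$ satisfying $DP_{D,\mathcal{S}}=P_{D,\mathcal{S}}^*D$, of minimal norm among such idempotents. *)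

theory Defs
  imports "HOL-Analysis.Analysis"
begin

definition cadj :: "complex^'n^'m \<Rightarrow> complex^'m^'n" where
  "cadj A = (\<chi> i j. cnj (A $ j $ i))"

definition csubspace :: "(complex^'n) set \<Rightarrow> bool" where
  "csubspace S \<longleftrightarrow> 0 \<in> S \<and> (\<forall>x\<in>S. \<forall>y\<in>S. x + y \<in> S) \<and> (\<forall>c. \<forall>x\<in>S. c *s x \<in> S)"

definition is_mp_inverse :: "complex^'n^'m \<Rightarrow> complex^'m^'n \<Rightarrow> bool" where
  "is_mp_inverse A X \<longleftrightarrow> A ** X ** A = A \<and> X ** A ** X = X \<and>
     cadj (A ** X) = A ** X \<and> cadj (X ** A) = X ** A"

definition mp_inverse :: "complex^'n^'m \<Rightarrow> complex^'m^'n" where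
  "mp_inverse A = (THE X. is_mp_inverse A X)"

definition orth_proj :: "(complex^'n) set \<Rightarrow> complex^'n^'n" where
  "orth_proj S = (THE Q. Q ** Q = Q \<and> cadj Q = Q \<and> range (\<lambda>x. Q *v x) = S)"

text \<open>With respect to S \<oplus> S^\<bottom>, D = [a b; b^* c] and P_{D,S} = [1 a^\<dagger>b; 0 0].
  As an n x n matrix, with Q the orthogonal projection onto S, this is
  Q + (QDQ)^\<dagger> Q D (I - Q), since (QDQ)^\<dagger> = a^\<dagger> \<oplus> 0.\<close>
definition P_DS :: "complex^'n^'n \<Rightarrow> (complex^'n) set \<Rightarrow> complex^'n^'n" where
  "P_DS D S = (let Q = orth_proj S in Q + mp_inverse (Q ** D ** Q) ** Q ** D ** (mat 1 - Q))"

definition opnorm :: "complex^'n^'m \<Rightarrow> real" where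
  "opnorm A = onorm (\<lambda>x. A *v x)"

definition cdiag :: "('n \<Rightarrow> real) \<Rightarrow> complex^'n^'n" where
  "cdiag d = (\<chi> i j. if i = j then complex_of_real (d i) else 0)"

definition pos_diag :: "(complex^'n^'n) set" where
  "pos_diag = {cdiag d | d. \<forall>i. d i > 0}"

definition nonneg_diag :: "(complex^'n^'n) set" where
  "nonneg_diag = {cdiag d | d. \<forall>i. d i \<ge> 0}"

end

theory Submission imports Defs begin

lemma cadj_cadj[simp]: "cadj (cadj A) = A"
  by (simp add: cadj_def vec_eq_iff)

lemma cadj_mult: "cadj (A ** B) = cadj B ** cadj A"
  by (simp add: cadj_def vec_eq_iff matrix_matrix_mult_def mult.commute)

lemma cadj_add: "cadj (A + B) = cadj A + cadj B"
  by (simp add: cadj_def vec_eq_iff)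

lemma cadj_diff: "cadj (A - B) = cadj A - cadj B"
  by (simp add: cadj_def vec_eq_iff)

lemma cadj_mat1[simp]: "cadj (mat 1 :: complex^'n^'n) = mat 1"
  by (simp add: cadj_def vec_eq_iff mat_def)

lemma cadj_zero[simp]: "cadj 0 = 0"
  by (simp add: cadj_def vec_eq_iff)

lemma cscaleR: "r *\<^sub>R (z::complex) = of_real r * z"
  by (simp add: scaleR_conv_of_real)

lemma cadj_scaleR: "cadj (r *\<^sub>R A) = r *\<^sub>R cadj A"
  by (simp add: cadj_def vec_eq_iff cscaleR)

lemma cadj_cdiag[simp]: "cadj (cdiag d) = cdiag d"
  by (simp add: cadj_def vec_eq_iff cdiag_def)

lemma scaleR_mat_mult_left: "(r *\<^sub>R A) ** B = r *\<^sub>R (A ** (B::complex^'n^'m))"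
  by (simp add: vec_eq_iff matrix_matrix_mult_def cscaleR sum_distrib_left mult.assoc)

lemma scaleR_mat_mult_right: "A ** (r *\<^sub>R B) = r *\<^sub>R (A ** (B::complex^'n^'m))"
  by (simp add: vec_eq_iff matrix_matrix_mult_def cscaleR sum_distrib_left mult.assoc mult.left_commute)

lemma scaleR_mat_vec: "(r *\<^sub>R A) *v x = r *\<^sub>R (A *v (x::complex^'n))"
  by (simp add: vec_eq_iff matrix_vector_mult_def cscaleR sum_distrib_left mult.assoc)

definition h :: "complex^'n \<Rightarrow> complex^'n \<Rightarrow> complex" where
  "h x y = (\<Sum>i\<in>UNIV. x$i * cnj (y$i))"

lemma h_adj: "h (A *v x) y = h x (cadj A *v y)"
  unfolding h_def cadj_def matrix_vector_mult_def
  apply (simp add: sum_distrib_left sum_distrib_right)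
  apply (subst sum.swap)
  apply (simp add: mult_ac)
  done

lemma h_add_left: "h (x + y) z = h x z + h y z"
  by (simp add: h_def distrib_right sum.distrib)
lemma h_diff_left: "h (x - y) z = h x z - h y z"
  by (simp add: h_def left_diff_distrib sum_subtractf)
lemma h_add_right: "h z (x + y) = h z x + h z y"
  by (simp add: h_def distrib_left sum.distrib)
lemma h_diff_right: "h z (x - y) = h z x - h z y"
  by (simp add: h_def right_diff_distrib sum_subtractf)
lemma h_smult_left: "h (c *s x) y = c * h x y"
  by (simp add: h_def sum_distrib_left mult.assoc)
lemma h_smult_right: "h x (c *s y) = cnj c * h x y"
  by (simp add: h_def sum_distrib_left mult_ac)
lemma h_cnj: "h y x = cnj (h x y)"
  by (simp add: h_def mult.commute)
lemma h_self: "h x x = of_real (\<Sum>i\<in>UNIV. (cmod (x$i))\<^sup>2)"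
  by (simp add: h_def complex_norm_square[symmetric])
lemma h_self_zero: "h x x = 0 \<longleftrightarrow> x = 0"
proof -
  have "h x x = 0 \<longleftrightarrow> (\<Sum>i\<in>UNIV. (cmod (x$i))\<^sup>2) = 0"
    by (simp add: h_self del: of_real_sum)
  also have "\<dots> \<longleftrightarrow> (\<forall>i. (cmod (x$i))\<^sup>2 = 0)"
    by (subst sum_nonneg_eq_0_iff) auto
  also have "\<dots> \<longleftrightarrow> (\<forall>i. x$i = 0)" by simp
  finally show ?thesis by (simp add: vec_eq_iff)
qed
lemma h_zero_left[simp]: "h 0 y = 0" by (simp add: h_def)
lemma h_zero_right[simp]: "h y 0 = 0" by (simp add: h_def)

lemma h_real_inner: "Re (h x y) = inner x y"
  by (simp add: h_def inner_vec_def inner_complex_def Re_sum)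


lemma mp_unique:
  assumes X: "is_mp_inverse A X" and Y: "is_mp_inverse A Y"
  shows "X = Y"
proof -
  from X have X1: "A ** X ** A = A" and X2: "X ** A ** X = X" and X3: "cadj (A ** X) = A ** X"
    and X4: "cadj (X ** A) = X ** A" by (auto simp: is_mp_inverse_def)
  from Y have Y1: "A ** Y ** A = A" and Y2: "Y ** A ** Y = Y" and Y3: "cadj (A ** Y) = A ** Y"
    and Y4: "cadj (Y ** A) = Y ** A" by (auto simp: is_mp_inverse_def)
  have "cadj A = cadj ((A ** Y) ** A)" using Y1 by simp
  also have "\<dots> = cadj A ** cadj (A ** Y)" by (rule cadj_mult)
  also have "\<dots> = cadj A ** (A ** Y)" by (simp only: Y3)
  finally have cA1: "cadj A = cadj A ** (A ** Y)" .
  have "cadj A = cadj (A ** (X ** A))" using X1 by (simp add: matrix_mul_assoc)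
  also have "\<dots> = cadj (X ** A) ** cadj A" by (rule cadj_mult)
  also have "\<dots> = (X ** A) ** cadj A" by (simp only: X4)
  finally have cA2: "cadj A = (X ** A) ** cadj A" .
  have "X = X ** (A ** X)" using X2 by (simp add: matrix_mul_assoc)
  also have "\<dots> = X ** (cadj X ** cadj A)" using X3 by (simp add: cadj_mult)
  also have "\<dots> = X ** (cadj X ** (cadj A ** (A ** Y)))" using cA1 by simp
  also have "\<dots> = X ** cadj (A ** X) ** A ** Y" by (simp add: cadj_mult matrix_mul_assoc)
  also have "\<dots> = (X ** A ** X) ** A ** Y" by (simp add: X3 matrix_mul_assoc)
  also have "\<dots> = X ** A ** Y" by (simp add: X2)
  finally have eX: "X = X ** A ** Y" .
  have "Y = (Y ** A) ** Y" using Y2 by (simp add: matrix_mul_assoc)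
  also have "\<dots> = (cadj A ** cadj Y) ** Y" using Y4 by (simp add: cadj_mult)
  also have "\<dots> = ((X ** A) ** cadj A ** cadj Y) ** Y" using cA2 by simp
  also have "\<dots> = X ** A ** cadj (Y ** A) ** Y" by (simp add: cadj_mult matrix_mul_assoc)
  also have "\<dots> = X ** A ** (Y ** A ** Y)" by (simp add: Y4 matrix_mul_assoc)
  also have "\<dots> = X ** A ** Y" by (simp add: Y2)
  finally show ?thesis using eX by simp
qed

lemma mp_inverse_eq: "is_mp_inverse A X \<Longrightarrow> mp_inverse A = X"
  unfolding mp_inverse_def by (metis mp_unique the_equality)

lemma mat_axis: "(A *v axis j 1) $ i = A $ i $ (j::'n::finite)"
  by (simp add: matrix_vector_mult_def axis_def if_distrib cong: if_cong)

lemma mat_eq_action: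
  fixes A B :: "complex^'n^'m"
  assumes "\<And>x. A *v x = B *v x" shows "A = B"
proof -
  have "A $ i $ j = B $ i $ j" for i j
    using mat_axis[of A j i] mat_axis[of B j i] assms[of "axis j 1"] by simp
  then show ?thesis by (simp add: vec_eq_iff)
qed

lemma mat_smult: "A *v (c *s x) = c *s (A *v (x::complex^'n))"
  by (simp add: vec_eq_iff matrix_vector_mult_def sum_distrib_left mult_ac)

lemma scaleR_smult: "r *\<^sub>R x = (of_real r) *s (x::complex^'n)"
  by (simp add: vec_eq_iff cscaleR)

lemma csub_subspace: "csubspace T \<Longrightarrow> subspace T"
  unfolding csubspace_def subspace_def by (simp add: scaleR_smult)

lemma csub_diff: "csubspace T \<Longrightarrow> x \<in> T \<Longrightarrow> y \<in> T \<Longrightarrow> x - y \<in> T"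
  by (rule subspace_diff[OF csub_subspace])

lemma csub_sum: "csubspace T \<Longrightarrow> (\<And>j. f j \<in> T) \<Longrightarrow> sum f A \<in> T"
  by (rule subspace_sum[OF csub_subspace]) auto

lemma csub_smult: "csubspace T \<Longrightarrow> x \<in> T \<Longrightarrow> c *s x \<in> T"
  unfolding csubspace_def by blast

lemma h_axis_right: "h u (axis j 1) = u $ j"
  by (simp add: h_def axis_def if_distrib cong: if_cong)

lemma h_axis_left: "h (axis j 1) u = cnj (u $ j)"
  using h_axis_right[of u j] h_cnj by metis

lemma h_sum_left: "h (sum f S) w = (\<Sum>j\<in>S. h (f j) w)"
  apply (simp add: h_def sum_component sum_distrib_right)
  apply (subst sum.swap)
  apply simp
  done

lemma decomp_exists:
  assumes T: "csubspace T"
  shows "\<exists>y\<in>T. \<forall>w\<in>T. h (x - y) w = 0"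
proof -
  have sp: "span T = T" using csub_subspace[OF T] by (simp add: span_eq_iff)
  obtain y z where y: "y \<in> T" and z: "\<And>w. w \<in> T \<Longrightarrow> orthogonal z w" and xyz: "x = y + z"
    using orthogonal_subspace_decomp_exists[of T x] sp by metis
  have "h (x - y) w = 0" if w: "w \<in> T" for w
  proof -
    have zz: "x - y = z" using xyz by simp
    have 1: "Re (h z w) = 0" using z[OF w] by (simp add: orthogonal_def h_real_inner)
    have "\<i> *s w \<in> T" using csub_smult[OF T w] .
    then have "Re (h z (\<i> *s w)) = 0" using z by (simp add: orthogonal_def h_real_inner)
    then have 2: "Im (h z w) = 0" by (simp add: h_smult_right)
    show ?thesis using 1 2 zz by (simp add: complex_eq_iff)
  qed
  then show ?thesis using y by blast
qed

lemma decomp_unique: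
  assumes T: "csubspace T" and y: "y \<in> T" "\<forall>w\<in>T. h (x - y) w = 0"
    and y': "y' \<in> T" "\<forall>w\<in>T. h (x - y') w = 0"
  shows "y = y'"
proof -
  have d: "y - y' \<in> T" using csub_diff[OF T] y y' by blast
  have "h (y - y') (y - y') = h (x - y') (y - y') - h (x - y) (y - y')"
    by (simp add: h_diff_left[symmetric])
  also have "\<dots> = 0" using d y y' by simp
  finally show ?thesis using h_self_zero[of "y - y'"] by simp
qed

definition proj :: "(complex^'n) set \<Rightarrow> complex^'n \<Rightarrow> complex^'n" where
  "proj T x = (SOME y. y \<in> T \<and> (\<forall>w\<in>T. h (x - y) w = 0))"

lemma proj_props:
  assumes "csubspace T" shows "proj T x \<in> T" "\<forall>w\<in>T. h (x - proj T x) w = 0"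
proof -
  have "\<exists>y. y \<in> T \<and> (\<forall>w\<in>T. h (x - y) w = 0)" using decomp_exists[OF assms, of x] by blast
  from someI_ex[OF this] show "proj T x \<in> T" "\<forall>w\<in>T. h (x - proj T x) w = 0"
    unfolding proj_def by blast+
qed

lemma proj_eqI:
  assumes "csubspace T" "y \<in> T" "\<forall>w\<in>T. h (x - y) w = 0" shows "proj T x = y"
  using decomp_unique[OF assms(1) proj_props[OF assms(1)] assms(2,3)] .

definition pmat :: "(complex^'n) set \<Rightarrow> complex^'n^'n" where
  "pmat T = (\<chi> i j. proj T (axis j 1) $ i)"

lemma pmat_action:
  assumes T: "csubspace T" shows "pmat T *v x = proj T x"
proof -
  have e: "pmat T *v x = (\<Sum>j\<in>UNIV. x $ j *s proj T (axis j 1))"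
    by (simp add: vec_eq_iff pmat_def matrix_vector_mult_def sum_component mult.commute)
  have inT: "pmat T *v x \<in> T" unfolding e
    by (rule csub_sum[OF T]) (simp add: csub_smult[OF T] proj_props[OF T])
  have "h (x - pmat T *v x) w = 0" if w: "w \<in> T" for w
  proof -
    have pj: "h (proj T (axis j 1)) w = cnj (w $ j)" for j
      using proj_props(2)[OF T, of "axis j 1"] w by (simp add: h_diff_left h_axis_left)
    have "h (pmat T *v x) w = (\<Sum>j\<in>UNIV. x $ j * cnj (w $ j))"
      unfolding e h_sum_left by (simp add: h_smult_left pj)
    then show ?thesis by (simp add: h_diff_left h_def left_diff_distrib sum_subtractf)
  qed
  then show ?thesis using proj_eqI[OF T inT] by metis
qed

lemma proj_in: "csubspace T \<Longrightarrow> y \<in> T \<Longrightarrow> proj T y = y"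
  using proj_eqI by fastforce

lemma proj_sym: assumes T: "csubspace T" shows "h (proj T a) b = h a (proj T b)"
proof -
  have "h (b - proj T b) (proj T a) = 0" using proj_props[OF T, of b] proj_props[OF T, of a] by blast
  then have 1: "h (proj T a) (b - proj T b) = 0"
    using h_cnj[of "proj T a" "b - proj T b"] by simp
  have 2: "h (a - proj T a) (proj T b) = 0"
    using proj_props[OF T, of b] proj_props[OF T, of a] by blast
  show ?thesis using 1 2 by (simp add: h_diff_left h_diff_right)
qed

lemma pmat_props:
  assumes T: "csubspace T"
  shows "pmat T ** pmat T = pmat T" "cadj (pmat T) = pmat T" "range (\<lambda>x. pmat T *v x) = T"
proof -
  show "pmat T ** pmat T = pmat T"
    by (rule mat_eq_action) (simp add: matrix_vector_mul_assoc[symmetric] pmat_action[OF T] proj_in[OF T] proj_props[OF T])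
  show "cadj (pmat T) = pmat T"
  proof -
    have F: "proj T (axis i 1) $ j = cnj (proj T (axis j 1) $ i)" for i j
      using proj_sym[OF T, of "axis i 1" "axis j 1"] by (simp add: h_axis_left h_axis_right)
    have "cnj (proj T (axis i 1) $ j) = proj T (axis j 1) $ i" for i j
      using F[of j i] by (rule sym)
    then show ?thesis by (simp add: cadj_def pmat_def vec_eq_iff)
  qed
  show "range (\<lambda>x. pmat T *v x) = T"
  proof (intro set_eqI iffI)
    fix t assume "t \<in> range (\<lambda>x. pmat T *v x)"
    then show "t \<in> T" using proj_props[OF T] by (auto simp: pmat_action[OF T])
  next
    fix t assume "t \<in> T"
    then have "t = pmat T *v t" by (simp add: pmat_action[OF T] proj_in[OF T])
    then show "t \<in> range (\<lambda>x. pmat T *v x)" by (rule image_eqI) simp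
  qed
qed

lemma orth_proj_unique:
  assumes "Q ** Q = Q" "cadj Q = Q" "Q' ** Q' = Q'" "cadj Q' = Q'"
    "range (\<lambda>x. Q *v x) = range (\<lambda>x. Q' *v (x::complex^'n))"
  shows "Q = Q'"
proof -
  have a: "Q' ** Q = Q"
  proof (rule mat_eq_action)
    fix x
    have "Q *v x \<in> range (\<lambda>x. Q *v x)" by simp
    then have "Q *v x \<in> range (\<lambda>x. Q' *v x)" using assms(5) by simp
    then obtain y where y: "Q *v x = Q' *v y" by auto
    have "(Q' ** Q) *v x = Q' *v (Q *v x)" by (simp add: matrix_vector_mul_assoc)
    also have "\<dots> = Q' *v (Q' *v y)" by (simp add: y)
    also have "\<dots> = Q' *v y" by (simp add: matrix_vector_mul_assoc assms(3))
    finally show "(Q' ** Q) *v x = Q *v x" using y by simp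
  qed
  have b: "Q ** Q' = Q'"
  proof (rule mat_eq_action)
    fix x
    have "Q' *v x \<in> range (\<lambda>x. Q' *v x)" by simp
    then have "Q' *v x \<in> range (\<lambda>x. Q *v x)" using assms(5) by simp
    then obtain y where y: "Q' *v x = Q *v y" by auto
    have "(Q ** Q') *v x = Q *v (Q' *v x)" by (simp add: matrix_vector_mul_assoc)
    also have "\<dots> = Q *v (Q *v y)" by (simp add: y)
    also have "\<dots> = Q *v y" by (simp add: matrix_vector_mul_assoc assms(1))
    finally show "(Q ** Q') *v x = Q' *v x" using y by simp
  qed
  have "Q = cadj (Q' ** Q)" using a assms(2) by simp
  also have "\<dots> = Q ** Q'" by (simp add: cadj_mult assms)
  finally show ?thesis using b by simp
qed

lemma orth_proj_props:
  assumes T: "csubspace T"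
  shows "orth_proj T ** orth_proj T = orth_proj T" "cadj (orth_proj T) = orth_proj T"
    "range (\<lambda>x. orth_proj T *v x) = T"
proof -
  have "orth_proj T = pmat T"
    unfolding orth_proj_def
  proof (rule the_equality)
    show "pmat T ** pmat T = pmat T \<and> cadj (pmat T) = pmat T \<and> range (\<lambda>x. pmat T *v x) = T"
      using pmat_props[OF T] by blast
    fix Q assume "Q ** Q = Q \<and> cadj Q = Q \<and> range (\<lambda>x. Q *v x) = T"
    then show "Q = pmat T" using orth_proj_unique[of Q "pmat T"] pmat_props[OF T] by simp
  qed
  then show "orth_proj T ** orth_proj T = orth_proj T" "cadj (orth_proj T) = orth_proj T"
    "range (\<lambda>x. orth_proj T *v x) = T" using pmat_props[OF T] by auto
qed

lemma range_csub: "csubspace (range (\<lambda>x. (A::complex^'n^'m) *v x))"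
  unfolding csubspace_def
  by (auto simp: image_def matrix_vector_right_distrib mat_smult[symmetric]) (metis matrix_vector_mult_0_right matrix_vector_right_distrib)+


lemma mm_add_l: "(A::complex^'n^'m) ** (B + C) = A ** B + A ** C"
  by (rule matrix_add_ldistrib)
lemma mm_add_r: "((A::complex^'n^'m) + B) ** C = A ** C + B ** C"
  by (simp add: vec_eq_iff matrix_matrix_mult_def distrib_right sum.distrib)
lemma mm_diff_l: "(A::complex^'n^'m) ** (B - C) = A ** B - A ** C"
  by (simp add: vec_eq_iff matrix_matrix_mult_def right_diff_distrib sum_subtractf)
lemma mm_diff_r: "((A::complex^'n^'m) - B) ** C = A ** C - B ** C"
  by (simp add: vec_eq_iff matrix_matrix_mult_def left_diff_distrib sum_subtractf)

lemmas mm_distrib = mm_add_l mm_add_r mm_diff_l mm_diff_r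

lemma inv_exists:
  fixes B :: "complex^'n^'n"
  assumes "\<And>x. B *v x = 0 \<Longrightarrow> x = 0"
  obtains Binv where "Binv ** B = mat 1" "B ** Binv = mat 1"
proof -
  obtain Binv where "Binv ** B = mat 1" using matrix_left_invertible_ker[of B] assms by blast
  moreover then have "B ** Binv = mat 1" using matrix_left_right_inverse by blast
  ultimately show ?thesis using that by blast
qed

lemma mp_from_proj:
  fixes A P Binv :: "complex^'n^'n"
  assumes hA: "cadj A = A" and PP: "P ** P = P" and hP: "cadj P = P" and AP: "A ** P = A"
    and L: "Binv ** (A + mat 1 - P) = mat 1" and R: "(A + mat 1 - P) ** Binv = mat 1"
  shows "is_mp_inverse A (Binv ** P)" "A ** (Binv ** P) = P" "(Binv ** P) ** A = P"
    "P ** (Binv ** P) = Binv ** P"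
proof -
  define B where "B = A + mat 1 - P"
  have PA: "P ** A = A"
  proof -
    have "P ** A = cadj (A ** P)" by (simp add: cadj_mult hA hP)
    then show ?thesis using AP hA by simp
  qed
  have BP: "B ** P = A" by (simp add: B_def mm_distrib AP PP)
  have PB: "P ** B = A" by (simp add: B_def mm_distrib PA PP)
  have L': "Binv ** B = mat 1" and R': "B ** Binv = mat 1" using L R by (simp_all add: B_def)
  have comm: "Binv ** P = P ** Binv"
  proof -
    have "Binv ** P = Binv ** (P ** (B ** Binv))" by (simp add: R')
    also have "\<dots> = Binv ** (B ** P) ** Binv" by (simp add: matrix_mul_assoc BP PB)
    also have "\<dots> = (Binv ** B) ** P ** Binv" by (simp add: matrix_mul_assoc)
    finally show ?thesis by (simp add: L')
  qed
  have BiA: "Binv ** A = P"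
  proof -
    have "Binv ** A = (Binv ** B) ** P" by (simp add: BP[symmetric] matrix_mul_assoc)
    then show ?thesis by (simp add: L')
  qed
  have ABi: "A ** Binv = P"
  proof -
    have "A ** Binv = P ** (B ** Binv)" by (simp add: PB[symmetric] matrix_mul_assoc)
    then show ?thesis by (simp add: R')
  qed
  show AX: "A ** (Binv ** P) = P" by (simp add: matrix_mul_assoc ABi PP)
  show XA: "(Binv ** P) ** A = P" by (simp add: matrix_mul_assoc[symmetric] PA BiA)
  show PX: "P ** (Binv ** P) = Binv ** P" by (simp add: comm matrix_mul_assoc PP)
  show "is_mp_inverse A (Binv ** P)"
    unfolding is_mp_inverse_def
    using AX XA PX PA hP by (simp add: matrix_mul_assoc[symmetric])
qed

lemma PA_of_range:
  fixes A P :: "complex^'n^'n"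
  assumes PP: "P ** P = P" and rg: "range (\<lambda>x. P *v x) = range (\<lambda>x. A *v x)"
  shows "P ** A = A"
proof (rule mat_eq_action)
  fix x
  have "A *v x \<in> range (\<lambda>x. A *v x)" by simp
  then have "A *v x \<in> range (\<lambda>x. P *v x)" using rg by simp
  then obtain y where y: "A *v x = P *v y" by auto
  have "(P ** A) *v x = P *v (A *v x)" by (simp add: matrix_vector_mul_assoc)
  also have "\<dots> = P *v (P *v y)" by (simp add: y)
  also have "\<dots> = P *v y" by (simp add: matrix_vector_mul_assoc PP)
  finally show "(P ** A) *v x = A *v x" using y by simp
qed

lemma mp_herm:
  fixes A :: "complex^'n^'n"
  assumes hA: "cadj A = A"
  shows "\<exists>X P. is_mp_inverse A X \<and> A ** X = P \<and> X ** A = P \<and> P ** X = X \<and> P ** P = P \<and> cadj P = P"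
proof -
  define P where "P = pmat (range (\<lambda>x. A *v x))"
  note pp = pmat_props[OF range_csub[of A], folded P_def]
  have PA: "P ** A = A" using PA_of_range[OF pp(1) pp(3)] .
  have AP: "A ** P = A"
  proof -
    have "A ** P = cadj (P ** A)" by (simp add: cadj_mult hA pp(2))
    then show ?thesis using PA hA by simp
  qed
  define B where "B = A + mat 1 - P"
  have PB: "P ** B = A" by (simp add: B_def mm_distrib PA pp(1))
  have inj: "x = 0" if Bx: "B *v x = 0" for x
  proof -
    have Ax: "A *v x = 0" using Bx PB by (metis matrix_vector_mul_assoc matrix_vector_mult_0_right)
    have "B *v x = A *v x + x - P *v x" by (simp add: B_def matrix_vector_mult_add_rdistrib matrix_vector_mult_diff_rdistrib)
    then have xP: "x = P *v x" using Bx Ax by simp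
    have "P *v x \<in> range (\<lambda>x. P *v x)" by simp
    then obtain z where z: "P *v x = A *v z" using pp(3) by auto
    have "h x x = h (A *v z) x" using xP z by simp
    also have "\<dots> = h z (A *v x)" by (simp add: h_adj hA)
    finally have "h x x = 0" using Ax by simp
    then show ?thesis using h_self_zero[of x] by simp
  qed
  obtain Binv where L: "Binv ** B = mat 1" and R: "B ** Binv = mat 1"
    using inv_exists[of B] inj by blast
  note m = mp_from_proj[OF hA pp(1) pp(2) AP L[unfolded B_def] R[unfolded B_def]]
  show ?thesis using m pp by blast
qed

lemma cadj_self_zero:
  fixes M :: "complex^'n^'m"
  assumes "cadj M ** M = 0" shows "M = 0"
proof (rule mat_eq_action)
  fix x
  have "h (M *v x) (M *v x) = h x (cadj M *v (M *v x))" by (simp add: h_adj)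
  also have "\<dots> = 0" by (simp add: matrix_vector_mul_assoc assms)
  finally show "M *v x = 0 *v x" using h_self_zero[of "M *v x"] by simp
qed

lemma sum_delta_mult: "(\<Sum>k\<in>UNIV. (if (i::'n::finite) = k then f k else 0) * g k) = f i * (g i :: complex)"
proof -
  have "(\<Sum>k\<in>UNIV. (if i = k then f k else 0) * g k) = (\<Sum>k\<in>UNIV. if i = k then f k * g k else 0)"
    by (rule sum.cong) auto
  also have "\<dots> = f i * g i" using sum.delta'[of UNIV i "\<lambda>k. f k * g k"] by simp
  finally show ?thesis .
qed

lemma cdiag_vec: "(cdiag a *v x) $ i = of_real (a i) * x $ i"
  unfolding matrix_vector_mult_def cdiag_def by (simp add: sum_delta_mult)

lemma cdiag_mult: "cdiag a ** cdiag b = cdiag (\<lambda>i. a i * b i)"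
proof -
  have "(\<Sum>k\<in>UNIV. (if i = k then complex_of_real (a i) else 0) * (if k = j then complex_of_real (b k) else 0))
     = (if i = j then complex_of_real (a i * b i) else 0)" for i j
  proof -
    have "(\<Sum>k\<in>UNIV. (if i = k then complex_of_real (a i) else 0) * (if k = j then complex_of_real (b k) else 0))
      = complex_of_real (a i) * (if i = j then complex_of_real (b i) else 0)"
      using sum_delta_mult[of i "\<lambda>k. of_real (a i)" "\<lambda>k. if k = j then of_real (b k) else 0"] by simp
    then show ?thesis by simp
  qed
  then show ?thesis by (simp add: vec_eq_iff matrix_matrix_mult_def cdiag_def)
qed

lemma h_cdiag: "h y (cdiag c *v y) = of_real (\<Sum>i\<in>UNIV. c i * (cmod (y$i))\<^sup>2)"
proof -
  have "h y (cdiag c *v y) = (\<Sum>i\<in>UNIV. of_real (c i) * (y$i * cnj (y$i)))"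
    by (simp add: h_def cdiag_vec mult_ac)
  also have "\<dots> = (\<Sum>i\<in>UNIV. of_real (c i * (cmod (y$i))\<^sup>2))"
    by (simp add: complex_norm_square[symmetric])
  finally show ?thesis by simp
qed

lemma cdiag_add_eps: "cdiag (\<lambda>i. d i + e) = cdiag d + e *\<^sub>R mat 1"
  by (simp add: vec_eq_iff cdiag_def mat_def cscaleR)


lemma on_nonneg: "0 \<le> opnorm (A::complex^'n^'m)"
  unfolding opnorm_def by (rule onorm_pos_le[OF matrix_vector_mul_bounded_linear])

lemma on_mult: "opnorm ((A::complex^'n^'m) ** (B::complex^'k^'n)) \<le> opnorm A * opnorm B"
proof -
  have e: "(\<lambda>x. (A ** B) *v x) = (\<lambda>x. A *v x) \<circ> (\<lambda>x. B *v x)"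
    by (simp add: o_def matrix_vector_mul_assoc)
  show ?thesis unfolding opnorm_def e
    by (rule onorm_compose[OF matrix_vector_mul_bounded_linear matrix_vector_mul_bounded_linear])
qed

lemma on_add: "opnorm ((A::complex^'n^'m) + B) \<le> opnorm A + opnorm B"
proof -
  have e: "(\<lambda>x. (A + B) *v x) = (\<lambda>x. A *v x + B *v x)"
    by (simp add: matrix_vector_mult_add_rdistrib)
  show ?thesis unfolding opnorm_def e
    by (rule onorm_triangle[OF matrix_vector_mul_bounded_linear matrix_vector_mul_bounded_linear])
qed

lemma on_scale: "opnorm (r *\<^sub>R (A::complex^'n^'m)) = \<bar>r\<bar> * opnorm A"
proof -
  have e: "(\<lambda>x. (r *\<^sub>R A) *v x) = (\<lambda>x. r *\<^sub>R (A *v x))"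
    by (simp add: scaleR_mat_vec)
  show ?thesis unfolding opnorm_def e
    by (rule onorm_scaleR[OF matrix_vector_mul_bounded_linear])
qed

definition pds :: "complex^'n^'n \<Rightarrow> complex^'n^'n \<Rightarrow> complex^'n^'n" where
  "pds Q D = Q + mp_inverse (Q ** D ** Q) ** Q ** D ** (mat 1 - Q)"

lemma P_DS_pds: "P_DS D S = pds (orth_proj S) D"
  by (simp add: P_DS_def pds_def Let_def)

lemma core:
  fixes Q :: "complex^'n^'n" and d :: "'n \<Rightarrow> real"
  assumes QQ: "Q ** Q = Q" and hQ: "cadj Q = Q" and dnn: "\<forall>i. d i \<ge> 0"
  shows "\<exists>C e0. 0 < e0 \<and> (\<forall>e. 0 < e \<longrightarrow> e \<le> e0 \<longrightarrow>
           opnorm (pds Q (cdiag d)) \<le> opnorm (pds Q (cdiag (\<lambda>i. d i + e))) + C * e)"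
proof -
  define D where "D = cdiag d"
  define A where "A = Q ** D ** Q"
  have hA: "cadj A = A" by (simp add: A_def D_def cadj_mult hQ matrix_mul_assoc)
  obtain X P where mpX: "is_mp_inverse A X" and AX: "A ** X = P" and XA: "X ** A = P"
    and PX: "P ** X = X" and PP: "P ** P = P" and hP: "cadj P = P"
    using mp_herm[OF hA] by blast
  have mpA: "mp_inverse A = X" by (rule mp_inverse_eq[OF mpX])
  define b where "b = Q ** D ** (mat 1 - Q)"
  have pds0: "pds Q D = Q + X ** b"
    by (simp add: pds_def A_def[symmetric] mpA b_def matrix_mul_assoc)
  have QA: "Q ** A = A" by (simp add: A_def matrix_mul_assoc QQ)
  have AQ: "A ** Q = A" by (simp add: A_def matrix_mul_assoc[symmetric] QQ)
  have QP: "Q ** P = P" by (simp add: AX[symmetric] matrix_mul_assoc QA)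
  have QX: "Q ** X = X"
  proof -
    have "Q ** X = Q ** P ** X" by (simp add: PX matrix_mul_assoc[symmetric])
    then show ?thesis by (simp add: QP PX)
  qed
  have AP: "A ** P = A"
  proof -
    have "A ** P = A ** X ** A" by (simp add: XA[symmetric] matrix_mul_assoc)
    then show ?thesis using mpX by (simp add: is_mp_inverse_def)
  qed
  have Qb: "Q ** b = b" by (simp add: b_def matrix_mul_assoc QQ)
  have Pb: "P ** b = b"
  proof -
    define Z where "Z = mat 1 - P"
    have hZ: "cadj Z = Z" by (simp add: Z_def cadj_diff hP)
    have AZ: "A ** Z = 0" by (simp add: Z_def mm_diff_l AP)
    define E where "E = cdiag (\<lambda>i. sqrt (d i))"
    have EE: "E ** E = D"
      using dnn by (simp add: E_def D_def cdiag_mult)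
    define M where "M = E ** Q ** Z"
    have "cadj M ** M = Z ** Q ** (E ** E) ** Q ** Z"
      by (simp add: M_def E_def cadj_mult hQ hZ matrix_mul_assoc)
    also have "\<dots> = Z ** (A ** Z)" by (simp add: EE A_def matrix_mul_assoc)
    also have "\<dots> = 0" by (simp add: AZ)
    finally have "M = 0" by (rule cadj_self_zero)
    moreover have "D ** Q ** Z = E ** M"
      by (simp add: M_def EE[symmetric] matrix_mul_assoc)
    ultimately have DQZ: "D ** Q ** Z = 0" by simp
    have "Z ** Q ** D = cadj (D ** Q ** Z)"
      by (simp add: D_def cadj_mult hQ hZ matrix_mul_assoc)
    then have ZQD: "Z ** Q ** D = 0" using DQZ by simp
    have "Z ** b = (Z ** Q ** D) ** (mat 1 - Q)" by (simp add: b_def matrix_mul_assoc)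
    then have "Z ** b = 0" using ZQD by simp
    then show ?thesis by (simp add: Z_def mm_diff_r)
  qed
  define nX where "nX = opnorm X"
  define C where "C = 2 * nX * opnorm (X ** b)"
  define e0 where "e0 = 1 / (2 * (nX + 1))"
  have nXnn: "0 \<le> nX" by (simp add: nX_def on_nonneg)
  have e0pos: "0 < e0" using nXnn by (simp add: e0_def)
  have "opnorm (pds Q D) \<le> opnorm (pds Q (cdiag (\<lambda>i. d i + e))) + C * e"
    if epos: "0 < e" and ele: "e \<le> e0" for e
  proof -
    define De where "De = cdiag (\<lambda>i. d i + e)"
    have De: "De = D + e *\<^sub>R mat 1" by (simp add: De_def D_def cdiag_add_eps)
    define Ae where "Ae = Q ** De ** Q"
    have Ae: "Ae = A + e *\<^sub>R Q"
      by (simp add: Ae_def De A_def mm_distrib scaleR_mat_mult_left scaleR_mat_mult_right QQ)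
    have hAe: "cadj Ae = Ae" by (simp add: Ae cadj_add cadj_scaleR hA hQ)
    have AeQ: "Ae ** Q = Ae" by (simp add: Ae mm_distrib scaleR_mat_mult_left AQ QQ)
    have QAe: "Q ** Ae = Ae" by (simp add: Ae mm_distrib scaleR_mat_mult_right QA QQ)
    define Be where "Be = Ae + mat 1 - Q"
    have QBe: "Q ** Be = Ae" by (simp add: Be_def mm_distrib QAe QQ)
    have inj: "x = 0" if Bx: "Be *v x = 0" for x
    proof -
      have Aex: "Ae *v x = 0" using Bx QBe by (metis matrix_vector_mul_assoc matrix_vector_mult_0_right)
      have "Be *v x = Ae *v x + x - Q *v x"
        by (simp add: Be_def matrix_vector_mult_add_rdistrib matrix_vector_mult_diff_rdistrib)
      then have xQ: "x = Q *v x" using Bx Aex by simp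
      define y where "y = Q *v x"
      have "h x (Ae *v x) = h x (Q *v (De *v y))"
        by (simp add: Ae_def y_def matrix_vector_mul_assoc matrix_mul_assoc)
      also have "\<dots> = h y (De *v y)" using h_adj[of Q x "De *v y"] by (simp add: hQ y_def)
      also have "\<dots> = of_real (\<Sum>i\<in>UNIV. (d i + e) * (cmod (y$i))\<^sup>2)"
        by (simp add: De_def h_cdiag)
      finally have H: "h x (Ae *v x) = of_real (\<Sum>i\<in>UNIV. (d i + e) * (cmod (y$i))\<^sup>2)" .
      have "(of_real (\<Sum>i\<in>UNIV. (d i + e) * (cmod (y$i))\<^sup>2) :: complex) = 0"
        by (metis H Aex h_zero_right)
      then have "(\<Sum>i\<in>UNIV. (d i + e) * (cmod (y$i))\<^sup>2) = 0" by (simp only: of_real_eq_0_iff)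
      moreover have "\<forall>i. 0 \<le> (d i + e) * (cmod (y$i))\<^sup>2" using dnn epos
        by (simp add: add_nonneg_nonneg less_imp_le)
      ultimately have "\<forall>i\<in>UNIV. (d i + e) * (cmod (y$i))\<^sup>2 = 0"
        using sum_nonneg_eq_0_iff[of UNIV "\<lambda>i. (d i + e) * (cmod (y$i))\<^sup>2"] by simp
      moreover have "\<forall>i. d i + e > 0" using dnn epos by (simp add: add_nonneg_pos)
      ultimately have "\<forall>i. y $ i = 0" by (auto simp: less_le)
      then have "y = 0" by (simp add: vec_eq_iff)
      then show ?thesis using xQ y_def by simp
    qed
    obtain Binv where L: "Binv ** Be = mat 1" and R: "Be ** Binv = mat 1"
      using inv_exists[of Be] inj by blast
    note m = mp_from_proj[OF hAe QQ hQ AeQ L[unfolded Be_def] R[unfolded Be_def]]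
    have mpAe: "mp_inverse Ae = Binv ** Q" by (rule mp_inverse_eq[OF m(1)])
    have be: "Q ** De ** (mat 1 - Q) = b"
      by (simp add: De b_def mm_distrib scaleR_mat_mult_left scaleR_mat_mult_right QQ)
    define Y where "Y = Binv ** P"
    have "mp_inverse Ae ** Q ** De ** (mat 1 - Q) = Binv ** (Q ** (Q ** De ** (mat 1 - Q)))"
      by (simp add: mpAe matrix_mul_assoc)
    also have "\<dots> = Binv ** (Q ** b)" by (simp add: be)
    also have "\<dots> = Y ** b" by (simp add: Qb Y_def matrix_mul_assoc[symmetric] Pb)
    finally have pdse: "pds Q De = Q + Y ** b"
      by (simp add: pds_def Ae_def[symmetric])
    have BeX: "Be ** X = P + e *\<^sub>R X"
      by (simp add: Be_def Ae mm_distrib scaleR_mat_mult_left AX QX)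
    have "X = Binv ** (Be ** X)" by (simp add: matrix_mul_assoc L)
    also have "\<dots> = Binv ** P + e *\<^sub>R (Binv ** X)" by (simp add: BeX mm_distrib scaleR_mat_mult_right)
    also have "Binv ** X = Y ** X" by (simp add: Y_def matrix_mul_assoc[symmetric] PX)
    finally have XY: "X = Y + e *\<^sub>R (Y ** X)" by (simp add: Y_def)
    have Ydef2: "Y = X + (- e) *\<^sub>R (Y ** X)" using XY by (simp add: algebra_simps)
    have diff: "pds Q D = pds Q De + e *\<^sub>R (Y ** (X ** b))"
    proof -
      have "X ** b = (Y + e *\<^sub>R (Y ** X)) ** b" using XY by simp
      also have "\<dots> = Y ** b + e *\<^sub>R (Y ** (X ** b))"
        by (simp only: mm_distrib scaleR_mat_mult_left matrix_mul_assoc)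
      finally have eq: "X ** b = Y ** b + e *\<^sub>R (Y ** (X ** b))" .
      have "Q + X ** b = (Q + Y ** b) + e *\<^sub>R (Y ** (X ** b))"
        using eq by (metis add.assoc)
      then show ?thesis by (simp only: pds0 pdse)
    qed
    define nY where "nY = opnorm Y"
    have nYnn: "0 \<le> nY" by (simp add: nY_def on_nonneg)
    have "nY = opnorm (X + (- e) *\<^sub>R (Y ** X))" unfolding nY_def using Ydef2 by (rule arg_cong)
    also have "\<dots> \<le> opnorm X + opnorm ((- e) *\<^sub>R (Y ** X))" by (rule on_add)
    also have "opnorm ((- e) *\<^sub>R (Y ** X)) = \<bar>- e\<bar> * opnorm (Y ** X)" by (rule on_scale)
    finally have "nY \<le> nX + \<bar>- e\<bar> * opnorm (Y ** X)" unfolding nX_def .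
    also have "\<dots> \<le> nX + e * (nY * nX)"
      using on_mult[of Y X] epos by (simp add: nY_def nX_def)
    finally have nY1: "nY \<le> nX + e * (nY * nX)" .
    have "e * nX \<le> e0 * nX" using ele nXnn by (simp add: mult_right_mono)
    also have "\<dots> \<le> 1 / 2" using nXnn by (simp add: e0_def field_simps)
    finally have "e * nX \<le> 1/2" .
    then have "nY * (e * nX) \<le> nY * (1/2)" using nYnn by (rule mult_left_mono)
    then have nY2: "nY \<le> 2 * nX" using nY1 by (simp add: algebra_simps)
    have "opnorm (pds Q D) \<le> opnorm (pds Q De) + opnorm (e *\<^sub>R (Y ** (X ** b)))"
      unfolding diff by (rule on_add)
    also have "opnorm (e *\<^sub>R (Y ** (X ** b))) = e * opnorm (Y ** (X ** b))"
      using epos by (simp add: on_scale)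
    also have "opnorm (Y ** (X ** b)) \<le> nY * opnorm (X ** b)" unfolding nY_def by (rule on_mult)
    also have "nY * opnorm (X ** b) \<le> 2 * nX * opnorm (X ** b)"
      using nY2 by (simp add: mult_right_mono on_nonneg)
    finally show ?thesis using epos by (simp add: De_def D_def C_def mult_left_mono mult_ac)
  qed
  then show ?thesis using e0pos unfolding D_def by blast
qed


theorem proposition3p6:
  fixes S :: "(complex^'n) set"
  assumes "csubspace S"
  shows "(SUP D\<in>(pos_diag :: (complex^'n^'n) set). ereal (opnorm (P_DS D S)))
       = (SUP D\<in>(nonneg_diag :: (complex^'n^'n) set). ereal (opnorm (P_DS D S)))"
proof (rule antisym)
  have sub: "(pos_diag :: (complex^'n^'n) set) \<subseteq> nonneg_diag"
    unfolding pos_diag_def nonneg_diag_def by (auto intro: less_imp_le)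
  show "(SUP D\<in>(pos_diag :: (complex^'n^'n) set). ereal (opnorm (P_DS D S)))
       \<le> (SUP D\<in>(nonneg_diag :: (complex^'n^'n) set). ereal (opnorm (P_DS D S)))"
    by (rule SUP_subset_mono[OF sub]) simp
next
  define L where "L = (SUP D\<in>(pos_diag :: (complex^'n^'n) set). ereal (opnorm (P_DS D S)))"
  define Q where "Q = orth_proj S"
  note op = orth_proj_props[OF assms, folded Q_def]
  show "(SUP D\<in>(nonneg_diag :: (complex^'n^'n) set). ereal (opnorm (P_DS D S))) \<le> L"
  proof (rule SUP_least)
    fix D :: "complex^'n^'n" assume "D \<in> nonneg_diag"
    then obtain d where Dd: "D = cdiag d" and dnn: "\<forall>i. d i \<ge> 0"
      unfolding nonneg_diag_def by blast
    obtain C e0 where e0: "0 < e0" and Ce: "\<And>e. 0 < e \<Longrightarrow> e \<le> e0 \<Longrightarrow>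
           opnorm (pds Q (cdiag d)) \<le> opnorm (pds Q (cdiag (\<lambda>i. d i + e))) + C * e"
      using core[OF op(1) op(2) dnn] by blast
    show "ereal (opnorm (P_DS D S)) \<le> L"
    proof (rule ereal_le_epsilon2)
      fix r :: real assume rpos: "0 < r"
      define e where "e = min e0 (r / (\<bar>C\<bar> + 1))"
      have epos: "0 < e" using e0 rpos by (simp add: e_def)
      have ele: "e \<le> e0" by (simp add: e_def)
      have "C * e \<le> \<bar>C\<bar> * e" using epos by (simp add: mult_right_mono)
      also have "\<dots> \<le> \<bar>C\<bar> * (r / (\<bar>C\<bar> + 1))"
        by (rule mult_left_mono) (simp_all add: e_def)
      also have "\<dots> \<le> r" using rpos by (simp add: field_simps)
      finally have Cr: "C * e \<le> r" .
      have mem: "cdiag (\<lambda>i. d i + e) \<in> (pos_diag :: (complex^'n^'n) set)"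
        unfolding pos_diag_def using dnn epos by (auto intro: add_nonneg_pos)
      have "opnorm (P_DS D S) \<le> opnorm (P_DS (cdiag (\<lambda>i. d i + e)) S) + r"
        using Ce[OF epos ele] Cr by (simp add: P_DS_pds Q_def Dd)
      then have "ereal (opnorm (P_DS D S)) \<le> ereal (opnorm (P_DS (cdiag (\<lambda>i. d i + e)) S)) + ereal r"
        by simp
      also have "\<dots> \<le> L + ereal r"
        unfolding L_def by (rule add_right_mono) (rule SUP_upper[OF mem])
      finally show "ereal (opnorm (P_DS D S)) \<le> L + ereal r" .
    qed
  qed
qed

end
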